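(* Let $\delta\ge0$, $R,S\ge1$ and $i_1\in\{1,2,3,4\}$. Then $$\#\big\{\mathbf{x}\in\mathbb{Z}^2_{\mathrm{prim}}:\ \textstyle\prod_iL_i(\mathbf{x})\ne0,\ S\le|\mathbf{x}|<2S,\ R\le|L_{i_1}(\mathbf{x})|<2R,\ \Delta_{\mathrm{bad}}(\mathbf{x})>(SR)^\delta\big\}\ll(SR)^{1-\delta/8},$$ with implied constant depending only on $L_1,\dots,L_4$.
   Context: $L_1,\dots,L_4\in\mathbb{Z}[x_1,x_2]$ are pairwise non-proportional linear forms with coprime coefficients; $|\cdot|$ is the sup norm. For $\mathbf{x}$ with $\prod_iL_i(\mathbf{x})\ne0$, $\Delta_{\mathrm{bad}}(\mathbf{x})=\prod_{p^e\,\|\,L_1(\mathbf{x})\cdots L_4(\mathbf{x}),\ e\ge2}p^e$, the square-full part of $L_1(\mathbf{x})\cdots L_4(\mathbf{x})$. *)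

theory Defs
  imports "HOL-Analysis.Analysis" "HOL-Computational_Algebra.Computational_Algebra"
begin

definition linform :: "(nat \<Rightarrow> int) \<Rightarrow> (nat \<Rightarrow> int) \<Rightarrow> nat \<Rightarrow> int \<times> int \<Rightarrow> int" where
  "linform a b i x = a i * fst x + b i * snd x"

definition supnorm :: "int \<times> int \<Rightarrow> int" where
  "supnorm x = max \<bar>fst x\<bar> \<bar>snd x\<bar>"

definition sqfull_part :: "int \<Rightarrow> nat" where
  "sqfull_part n = (\<Prod>p\<in>prime_factors (nat \<bar>n\<bar>).
      if multiplicity p (nat \<bar>n\<bar>) \<ge> 2 then p ^ multiplicity p (nat \<bar>n\<bar>) else 1)"

definition Delta_bad :: "(nat \<Rightarrow> int) \<Rightarrow> (nat \<Rightarrow> int) \<Rightarrow> int \<times> int \<Rightarrow> nat" where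
  "Delta_bad a b x = sqfull_part (\<Prod>i\<in>{1..4}. linform a b i x)"

end

theory Submission
  imports Defs
begin
definition sqf :: "nat \<Rightarrow> nat" where
  "sqf n = (\<Prod>p\<in>prime_factors n. if multiplicity p n \<ge> 2 then p ^ multiplicity p n else 1)"

lemma sqfull_part_sqf: "sqfull_part n = sqf (nat \<bar>n\<bar>)"
  unfolding sqfull_part_def sqf_def by simp

lemma sqf_alt: "sqf n = (\<Prod>p\<in>prime_factors n. p ^ (if multiplicity p n \<ge> 2 then multiplicity p n else 0))"
  unfolding sqf_def by (intro prod.cong) auto

lemma mult_sqf:
  assumes "prime p"
  shows "multiplicity p (sqf n) = (if multiplicity p n \<ge> 2 then multiplicity p n else 0)"
  unfolding sqf_alt
  apply (subst multiplicity_prod_prime_powers)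
  using assms apply (simp_all add: in_prime_factors_imp_prime)
  using prime_factors_multiplicity[of n] assms by auto

lemma sqf_pos: "sqf n > 0"
  unfolding sqf_def by (intro prod_pos) (auto simp: prime_gt_0_nat in_prime_factors_imp_prime)

lemma sqf_dvd: "sqf n dvd n"
proof (cases "n = 0")
  case True then show ?thesis by simp
next
  case False
  show ?thesis
    using sqf_pos[of n] by (intro multiplicity_le_imp_dvd) (auto simp: mult_sqf)
qed

lemma sqf_rep: "\<exists>A B. A \<ge> 1 \<and> B \<ge> 1 \<and> sqf n = A^2 * B^3"
proof -
  define m where "m p = multiplicity p n" for p
  define h where "h p = (if m p \<ge> 2 \<and> odd (m p) then 1 else 0::nat)" for p
  define g where "g p = (if m p \<ge> 2 then (m p - 3 * h p) div 2 else 0)" for p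
  have e: "(if m p \<ge> 2 then m p else 0) = 2 * g p + 3 * h p" for p
    unfolding g_def h_def by (auto elim!: oddE)
  have "sqf n = (\<Prod>p\<in>prime_factors n. p ^ (2 * g p + 3 * h p))"
    unfolding sqf_alt by (intro prod.cong) (auto simp: e[symmetric] m_def)
  also have "\<dots> = (\<Prod>p\<in>prime_factors n. p ^ g p)^2 * (\<Prod>p\<in>prime_factors n. p ^ h p)^3"
    by (simp add: power_add power_mult prod.distrib prod_power_distrib[symmetric] mult.commute)
  finally show ?thesis
    by (intro exI[of _ "\<Prod>p\<in>prime_factors n. p ^ g p"] exI[of _ "\<Prod>p\<in>prime_factors n. p ^ h p"])
      (auto intro!: prod_ge_1 simp: in_prime_factors_imp_prime prime_gt_0_nat Suc_le_eq)
qed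

lemma arith4:
  fixes e1 e2 e3 e4 w :: nat
  assumes "min e1 e2 \<le> w" "min e1 e3 \<le> w" "min e1 e4 \<le> w" "min e2 e3 \<le> w" "min e2 e4 \<le> w" "min e3 e4 \<le> w"
  shows "(if 2 \<le> e1+e2+e3+e4 then e1+e2+e3+e4 else 0) \<le>
     (if 2 \<le> e1 then e1 else 0) + (if 2 \<le> e2 then e2 else 0) + (if 2 \<le> e3 then e3 else 0) + (if 2 \<le> e4 then e4 else 0) + 4 * w"
  using assms by (simp add: min_def split: if_splits)

lemma min_le_mult:
  fixes p u v r :: nat
  assumes "prime p" "r \<noteq> 0" "\<And>f. p^f dvd u \<Longrightarrow> p^f dvd v \<Longrightarrow> p^f dvd r"
  shows "min (multiplicity p u) (multiplicity p v) \<le> multiplicity p r"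
proof -
  let ?f = "min (multiplicity p u) (multiplicity p v)"
  have "p^?f dvd u" "p^?f dvd v" by (auto intro: multiplicity_dvd')
  then have "p^?f dvd r" by (rule assms(3))
  then show ?thesis using assms(1,2) by (intro multiplicity_geI) auto
qed

lemma key_dvd:
  fixes l :: "nat \<Rightarrow> nat" and r :: nat
  assumes l: "\<And>i. i \<in> {1..4} \<Longrightarrow> l i \<noteq> 0" and r: "r \<noteq> 0"
    and pair: "\<And>i k p f. i \<in> {1..4} \<Longrightarrow> k \<in> {1..4} \<Longrightarrow> i \<noteq> k \<Longrightarrow> p^f dvd l i \<Longrightarrow> p^f dvd l k \<Longrightarrow> p^f dvd r"
  shows "sqf (l 1 * l 2 * l 3 * l 4) dvd sqf (l 1) * sqf (l 2) * sqf (l 3) * sqf (l 4) * r^4"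
proof (rule multiplicity_le_imp_dvd)
  show "sqf (l 1 * l 2 * l 3 * l 4) \<noteq> 0" using sqf_pos by (metis not_less0)
next
  fix p :: nat assume p: "prime p"
  have l1: "l 1 \<noteq> 0" and l2: "l 2 \<noteq> 0" and l3: "l 3 \<noteq> 0" and l4: "l 4 \<noteq> 0" using l by auto
  have pe: "prime_elem p" using p by simp
  have sp: "sqf m \<noteq> 0" for m using sqf_pos by (metis not_less0)
  have m: "min (multiplicity p (l i)) (multiplicity p (l k)) \<le> multiplicity p r"
    if "i \<in> {1..4}" "k \<in> {1..4}" "i \<noteq> k" for i k
    by (rule min_le_mult[OF p r]) (rule pair[OF that])
  have lhs: "multiplicity p (sqf (l 1 * l 2 * l 3 * l 4)) =
     (let s = multiplicity p (l 1) + multiplicity p (l 2) + multiplicity p (l 3) + multiplicity p (l 4) in if 2 \<le> s then s else 0)"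
    using l1 l2 l3 l4 by (simp add: mult_sqf[OF p] prime_elem_multiplicity_mult_distrib[OF pe] Let_def)
  have rhs: "multiplicity p (sqf (l 1) * sqf (l 2) * sqf (l 3) * sqf (l 4) * r^4) =
    multiplicity p (sqf (l 1)) + multiplicity p (sqf (l 2)) + multiplicity p (sqf (l 3)) + multiplicity p (sqf (l 4)) + 4 * multiplicity p r"
    using r sp by (simp add: prime_elem_multiplicity_mult_distrib[OF pe] prime_elem_multiplicity_power_distrib[OF pe])
  show "multiplicity p (sqf (l 1 * l 2 * l 3 * l 4)) \<le> multiplicity p (sqf (l 1) * sqf (l 2) * sqf (l 3) * sqf (l 4) * r^4)"
    unfolding lhs rhs unfolding Let_def mult_sqf[OF p]
    by (rule arith4) (rule m; simp)+
qed

lemma set14: "{1..4::nat} = {1,2,3,4}" by auto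

lemma pair_dvd_res:
  fixes a b :: "nat \<Rightarrow> int" and d :: int
  assumes g: "gcd (fst x) (snd x) = 1"
    and "d dvd linform a b j x" "d dvd linform a b k x"
  shows "d dvd (a j * b k - a k * b j)"
proof -
  obtain x1 x2 where x: "x = (x1, x2)" by (cases x)
  have e1: "b k * linform a b j x - b j * linform a b k x = (a j * b k - a k * b j) * x1"
    unfolding linform_def x by (simp add: algebra_simps)
  have e2: "a j * linform a b k x - a k * linform a b j x = (a j * b k - a k * b j) * x2"
    unfolding linform_def x by (simp add: algebra_simps)
  have "d dvd (a j * b k - a k * b j) * x1" unfolding e1[symmetric] using assms(2,3) by simp
  moreover have "d dvd (a j * b k - a k * b j) * x2" unfolding e2[symmetric] using assms(2,3) by simp
  ultimately have "d dvd gcd ((a j * b k - a k * b j) * x1) ((a j * b k - a k * b j) * x2)" by simp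
  also have "gcd ((a j * b k - a k * b j) * x1) ((a j * b k - a k * b j) * x2) = \<bar>a j * b k - a k * b j\<bar>"
    using g x by (simp add: gcd_mult_distrib_int[symmetric])
  finally show ?thesis by simp
qed

definition Res :: "(nat \<Rightarrow> int) \<Rightarrow> (nat \<Rightarrow> int) \<Rightarrow> int" where
  "Res a b = (\<Prod>ik\<in>{ik\<in>{1..4}\<times>{1..4}. fst ik \<noteq> snd ik}. a (fst ik) * b (snd ik) - a (snd ik) * b (fst ik))"

lemma Res_nz:
  assumes "\<forall>i\<in>{1..4}. \<forall>j\<in>{1..4}. i \<noteq> j \<longrightarrow> a i * b j \<noteq> a j * b i"
  shows "Res a b \<noteq> 0"
  unfolding Res_def using assms by (subst prod_zero_iff) auto

lemma res_dvd_Res: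
  assumes "i \<in> {1..4}" "k \<in> {1..4}" "i \<noteq> k"
  shows "(a i * b k - a k * b i) dvd Res a b"
proof -
  have "(i,k) \<in> {ik\<in>{1..4}\<times>{1..4}. fst ik \<noteq> snd ik}" using assms by auto
  then show ?thesis unfolding Res_def
    using dvd_prodI[where a="(i,k)" and A="{ik\<in>{1..4}\<times>{1..4}. fst ik \<noteq> snd ik}" and f="\<lambda>ik. a (fst ik) * b (snd ik) - a (snd ik) * b (fst ik)"]
    by simp
qed

lemma delta_bound:
  fixes a b :: "nat \<Rightarrow> int"
  assumes np: "\<forall>i\<in>{1..4}. \<forall>j\<in>{1..4}. i \<noteq> j \<longrightarrow> a i * b j \<noteq> a j * b i"
    and g: "gcd (fst x) (snd x) = 1"
    and P: "(\<Prod>i\<in>{1..4}. linform a b i x) \<noteq> 0"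
  shows "Delta_bad a b x \<le> sqfull_part (linform a b 1 x) * sqfull_part (linform a b 2 x) *
           sqfull_part (linform a b 3 x) * sqfull_part (linform a b 4 x) * (nat \<bar>Res a b\<bar>)^4"
proof -
  define l where "l i = nat \<bar>linform a b i x\<bar>" for i
  define r where "r = nat \<bar>Res a b\<bar>"
  have l: "l i \<noteq> 0" if "i \<in> {1..4}" for i
    using P that unfolding l_def by (auto simp: prod_zero_iff)
  have r: "r \<noteq> 0" using Res_nz[OF np] unfolding r_def by simp
  have pair: "p^f dvd r" if "i \<in> {1..4}" "k \<in> {1..4}" "i \<noteq> k" "p^f dvd l i" "p^f dvd l k" for i k p f
  proof -
    have "int (p^f) dvd linform a b i x" "int (p^f) dvd linform a b k x"
      using that(4,5) unfolding l_def by (simp_all)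
    then have "int (p^f) dvd (a i * b k - a k * b i)" by (rule pair_dvd_res[OF g])
    also have "\<dots> dvd Res a b" by (rule res_dvd_Res[OF that(1-3)])
    finally show ?thesis unfolding r_def by (simp)
  qed
  have kd: "sqf (l 1 * l 2 * l 3 * l 4) dvd sqf (l 1) * sqf (l 2) * sqf (l 3) * sqf (l 4) * r^4"
    by (rule key_dvd[OF l r pair])
  have "Delta_bad a b x = sqf (l 1 * l 2 * l 3 * l 4)"
    unfolding Delta_bad_def sqfull_part_sqf set14 l_def
    by (simp add: abs_mult nat_mult_distrib mult.assoc)
  also have "\<dots> \<le> sqf (l 1) * sqf (l 2) * sqf (l 3) * sqf (l 4) * r^4"
    using kd r sqf_pos by (intro dvd_imp_le) auto
  finally show ?thesis unfolding l_def r_def sqfull_part_sqf .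
qed

lemma tail_sq_aux:
  assumes "m \<ge> 1"
  shows "(\<Sum>A\<in>{m..m+d}. 1 / real (A^2)) \<le> 2 / real m - 1 / real (m + d)"
proof (induction d)
  case 0
  have "1 / real (m^2) \<le> 1 / real m" using assms by (simp add: power2_eq_square field_simps)
  then show ?case by simp
next
  case (Suc d)
  have "{m..m + Suc d} = insert (m + Suc d) {m..m+d}" by auto
  then have "(\<Sum>A\<in>{m..m+Suc d}. 1 / real (A^2)) = 1 / real ((m + Suc d)^2) + (\<Sum>A\<in>{m..m+d}. 1 / real (A^2))"
    by simp
  also have "\<dots> \<le> 1 / real ((m + Suc d)^2) + (2 / real m - 1 / real (m + d))" using Suc by simp
  also have "\<dots> \<le> 2 / real m - 1 / real (m + Suc d)"
  proof -
    define n where "n = real (m + d)"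
    have n: "n \<ge> 1" using assms unfolding n_def by simp
    have a1: "1 / (n+1)^2 \<le> 1/(n*(n+1))" using n
      by (intro divide_left_mono) (auto simp: power2_eq_square)
    have a2: "1/n - 1/(n+1) = 1/(n*(n+1))" using n by (simp add: field_simps)
    have "1 / (n+1)^2 \<le> 1/n - 1/(n+1)" using a1 a2 by simp
    moreover have "1 / real (m + Suc d) = 1 / (n + 1)" "1 / real ((m + Suc d)^2) = 1 / (n+1)^2"
      "1 / real (m + d) = 1 / n" unfolding n_def by simp_all
    ultimately show ?thesis by linarith
  qed
  finally show ?case .
qed

lemma tail_sq:
  assumes "m \<ge> 1"
  shows "(\<Sum>A\<in>{m..N}. 1 / real (A^2)) \<le> 2 / real m"
proof (cases "m \<le> N")
  case True
  then have "{m..N} = {m..m+(N-m)}" by simp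
  then show ?thesis using tail_sq_aux[OF assms, of "N-m"] assms
    by (smt (verit) of_nat_0_le_iff divide_nonneg_nonneg)
next
  case False then show ?thesis by simp
qed

lemma tail_if:
  assumes t: "t > 0"
  shows "(\<Sum>A\<in>{1..N}. if t \<le> real (A^2) then 1/real (A^2) else 0) \<le> 2 / sqrt t"
proof -
  define m where "m = max 1 (nat \<lceil>sqrt t\<rceil>)"
  have m1: "m \<ge> 1" unfolding m_def by simp
  have msq: "sqrt t \<le> real m" unfolding m_def by linarith
  have sub: "{A\<in>{1..N}. t \<le> real (A^2)} \<subseteq> {m..N}"
  proof
    fix A assume A: "A \<in> {A\<in>{1..N}. t \<le> real (A^2)}"
    then have "sqrt t \<le> sqrt (real A ^ 2)" by (intro real_sqrt_le_mono) simp
    then have "sqrt t \<le> real A" by simp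
    then have "nat \<lceil>sqrt t\<rceil> \<le> A" by linarith
    then show "A \<in> {m..N}" using A unfolding m_def by auto
  qed
  have "(\<Sum>A\<in>{1..N}. if t \<le> real (A^2) then 1/real (A^2) else 0) = (\<Sum>A\<in>{A\<in>{1..N}. t \<le> real (A^2)}. 1/real (A^2))"
    by (subst sum.inter_filter) auto
  also have "\<dots> \<le> (\<Sum>A\<in>{m..N}. 1/real (A^2))" by (rule sum_mono2[OF _ sub]) auto
  also have "\<dots> \<le> 2 / real m" by (rule tail_sq[OF m1])
  also have "\<dots> \<le> 2 / sqrt t" using msq t m1 by (intro divide_left_mono) (auto intro: mult_pos_pos)
  finally show ?thesis .
qed

lemma step32:
  fixes n :: real
  assumes n: "n \<ge> 1"
  shows "1 / ((n+1) * sqrt (n+1)) \<le> 2 / sqrt n - 2 / sqrt (n+1)"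
proof -
  define x where "x = sqrt n"
  define y where "y = sqrt (n+1)"
  have x: "x \<ge> 1" using n unfolding x_def by simp
  have xy: "x < y" unfolding x_def y_def by simp
  have y2: "y^2 = x^2 + 1" unfolding x_def y_def using n by simp
  have ny: "n + 1 = y^2" using y2 n unfolding x_def by simp
  have "(y - x) * (y + x) = 1" using y2 by (simp add: algebra_simps power2_eq_square)
  then have yx: "y - x = 1 / (y + x)" using x xy by (simp add: field_simps)
  have "2 / x - 2 / y = 2 * (y - x) / (x * y)" using x xy by (simp add: field_simps)
  also have "\<dots> = 2 / (x * y * (y + x))" unfolding yx using x xy by (simp add: field_simps)
  finally have e: "2 / x - 2 / y = 2 / (x * y * (y + x))" .
  have "x * y * (y + x) \<le> 2 * (y^2 * y)"
  proof -
    have "x * y * (y + x) \<le> y * y * (y + y)" using x xy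
      by (intro mult_mono) (auto intro: mult_mono)
    then show ?thesis by (simp add: power2_eq_square algebra_simps)
  qed
  moreover have "0 < x * y * (y + x)" using x xy by simp
  ultimately have "2 / (2 * (y^2 * y)) \<le> 2 / (x * y * (y + x))"
    by (intro divide_left_mono) auto
  then have "1 / (y^2 * y) \<le> 2 / (x * y * (y + x))" by simp
  then show ?thesis unfolding ny[symmetric] y_def[symmetric] x_def[symmetric] e[symmetric]
    using ny by simp
qed

lemma sum32_aux:
  "(\<Sum>B\<in>{1..Suc d}. 1 / (real B * sqrt (real B))) \<le> 3 - 2 / sqrt (real (Suc d))"
proof (induction d)
  case 0 then show ?case by simp
next
  case (Suc d)
  have "{1..Suc (Suc d)} = insert (Suc (Suc d)) {1..Suc d}" by auto
  then have "(\<Sum>B\<in>{1..Suc (Suc d)}. 1 / (real B * sqrt (real B))) =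
     1 / (real (Suc (Suc d)) * sqrt (real (Suc (Suc d)))) + (\<Sum>B\<in>{1..Suc d}. 1 / (real B * sqrt (real B)))"
    by simp
  also have "\<dots> \<le> 1 / (real (Suc (Suc d)) * sqrt (real (Suc (Suc d)))) + (3 - 2 / sqrt (real (Suc d)))"
    using Suc by simp
  also have "\<dots> \<le> 3 - 2 / sqrt (real (Suc (Suc d)))"
    using step32[of "real (Suc d)"] by (simp add: add.commute)
  finally show ?case .
qed

lemma sum32: "(\<Sum>B\<in>{1..N}. 1 / (real B * sqrt (real B))) \<le> 3"
proof (cases N)
  case 0 then show ?thesis by simp
next
  case (Suc d)
  have "0 \<le> 2 / sqrt (real (Suc d))" by simp
  then show ?thesis using sum32_aux[of d] unfolding Suc by linarith
qed

lemma inner_B: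
  assumes U: "U > 0" and B: "B \<ge> 1"
  shows "(\<Sum>A\<in>{1..N}. if U \<le> real (A^2 * B^3) then 1 / real (A^2 * B^3) else 0)
           \<le> 2 / sqrt U * (1 / (real B * sqrt (real B)))"
proof -
  define c where "c = real (B^3)"
  have c: "c > 0" using B unfolding c_def by simp
  have "(\<Sum>A\<in>{1..N}. if U \<le> real (A^2 * B^3) then 1 / real (A^2 * B^3) else 0)
      = (\<Sum>A\<in>{1..N}. (1/c) * (if U / c \<le> real (A^2) then 1 / real (A^2) else 0))"
    using c by (intro sum.cong) (auto simp: c_def field_simps)
  also have "\<dots> = (1/c) * (\<Sum>A\<in>{1..N}. if U / c \<le> real (A^2) then 1 / real (A^2) else 0)"
    by (simp add: sum_distrib_left)
  also have "\<dots> \<le> (1/c) * (2 / sqrt (U / c))"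
    using c U by (intro mult_left_mono tail_if) auto
  also have "\<dots> = 2 / sqrt U * (1 / sqrt c)"
    using c U by (simp add: real_sqrt_divide field_simps)
  also have "sqrt c = real B * sqrt (real B)"
  proof -
    have "c = (real B)^2 * real B" unfolding c_def by (simp add: power3_eq_cube power2_eq_square)
    then show ?thesis by (simp add: real_sqrt_mult)
  qed
  finally show ?thesis .
qed

lemma sumAB:
  assumes U: "U > 0"
  shows "(\<Sum>p\<in>{p\<in>{1..N}\<times>{1..N}. U \<le> real (fst p^2 * snd p^3)}. 1 / real (fst p^2 * snd p^3)) \<le> 6 / sqrt U"
proof -
  have "(\<Sum>p\<in>{p\<in>{1..N}\<times>{1..N}. U \<le> real (fst p^2 * snd p^3)}. 1 / real (fst p^2 * snd p^3))
     = (\<Sum>p\<in>{1..N}\<times>{1..N}. if U \<le> real (fst p^2 * snd p^3) then 1 / real (fst p^2 * snd p^3) else 0)"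
    by (subst sum.inter_filter) auto
  also have "\<dots> = (\<Sum>A\<in>{1..N}. \<Sum>B\<in>{1..N}. if U \<le> real (A^2 * B^3) then 1 / real (A^2 * B^3) else 0)"
    by (subst sum.cartesian_product) (simp add: case_prod_beta)
  also have "\<dots> = (\<Sum>B\<in>{1..N}. \<Sum>A\<in>{1..N}. if U \<le> real (A^2 * B^3) then 1 / real (A^2 * B^3) else 0)"
    by (rule sum.swap)
  also have "\<dots> \<le> (\<Sum>B\<in>{1..N}. 2 / sqrt U * (1 / (real B * sqrt (real B))))"
    by (intro sum_mono inner_B U) auto
  also have "\<dots> = 2 / sqrt U * (\<Sum>B\<in>{1..N}. 1 / (real B * sqrt (real B)))"
    by (simp add: sum_distrib_left)
  also have "\<dots> \<le> 2 / sqrt U * 3"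
    using U by (intro mult_left_mono sum32) auto
  finally show ?thesis by simp
qed

lemma card_mult:
  fixes q :: int and N :: real
  assumes q: "q \<ge> 1" and N: "N \<ge> 0"
  shows "finite {u::int. q dvd u \<and> \<bar>u\<bar> \<le> N} \<and> real (card {u::int. q dvd u \<and> \<bar>u\<bar> \<le> N}) \<le> 2 * N / q + 1"
proof -
  define m where "m = \<lfloor>N / q\<rfloor>"
  have m0: "m \<ge> 0" unfolding m_def using q N by simp
  have sub: "{u::int. q dvd u \<and> \<bar>u\<bar> \<le> N} \<subseteq> (\<lambda>t. q * t) ` {-m..m}"
  proof
    fix u assume "u \<in> {u::int. q dvd u \<and> \<bar>u\<bar> \<le> N}"
    then have dv: "q dvd u" and le0: "\<bar>u\<bar> \<le> N" by auto
    from dv obtain t where t: "u = q * t" by (rule dvdE)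
    then have le: "\<bar>real_of_int (q*t)\<bar> \<le> N" using le0 t by simp
    have "real_of_int q * \<bar>real_of_int t\<bar> \<le> N" using le q by (simp add: abs_mult)
    then have "\<bar>real_of_int t\<bar> \<le> N / q" using q by (simp add: field_simps)
    then have "\<bar>t\<bar> \<le> m" unfolding m_def by linarith
    then have "t \<in> {-m..m}" by auto
    then show "u \<in> (\<lambda>t. q * t) ` {-m..m}" using t by (intro image_eqI[of _ _ t]) auto
  qed
  have fin: "finite {u::int. q dvd u \<and> \<bar>u\<bar> \<le> N}" by (rule finite_subset[OF sub]) simp
  have "card {u::int. q dvd u \<and> \<bar>u\<bar> \<le> N} \<le> card ((\<lambda>t. q * t) ` {-m..m})"
    by (rule card_mono[OF _ sub]) simp
  also have "\<dots> \<le> card {-m..m}" by (rule card_image_le) simp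
  finally have "real (card {u::int. q dvd u \<and> \<bar>u\<bar> \<le> N}) \<le> real (card {-m..m})" by simp
  also have "real (card {-m..m}) = 2 * real_of_int m + 1" using m0 by simp
  also have "\<dots> \<le> 2 * N / q + 1"
  proof -
    have "real_of_int m \<le> N / q" unfolding m_def by simp
    then show ?thesis by simp
  qed
  finally show ?thesis using fin by simp
qed

definition Mc :: "(nat \<Rightarrow> int) \<Rightarrow> (nat \<Rightarrow> int) \<Rightarrow> int" where
  "Mc a b = 1 + (\<Sum>i\<in>{1..4}. \<bar>a i\<bar> + \<bar>b i\<bar>)"

lemma Mc_ge1: "Mc a b \<ge> 1"
  unfolding Mc_def by (simp add: sum_nonneg)

lemma Lbound:
  assumes "i \<in> {1..4}"
  shows "\<bar>linform a b i x\<bar> \<le> Mc a b * supnorm x"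
proof -
  obtain x1 x2 where x: "x = (x1, x2)" by (cases x)
  have s: "\<bar>x1\<bar> \<le> supnorm x" "\<bar>x2\<bar> \<le> supnorm x" unfolding supnorm_def x by auto
  have "\<bar>linform a b i x\<bar> \<le> \<bar>a i\<bar> * \<bar>x1\<bar> + \<bar>b i\<bar> * \<bar>x2\<bar>"
    unfolding linform_def x by (simp add: abs_mult[symmetric] abs_triangle_ineq)
  also have "\<dots> \<le> \<bar>a i\<bar> * supnorm x + \<bar>b i\<bar> * supnorm x"
    using s by (intro add_mono mult_left_mono) auto
  also have "\<dots> = (\<bar>a i\<bar> + \<bar>b i\<bar>) * supnorm x" by (simp add: algebra_simps)
  also have "\<dots> \<le> Mc a b * supnorm x"
  proof (rule mult_right_mono)
    have "\<bar>a i\<bar> + \<bar>b i\<bar> \<le> (\<Sum>i\<in>{1..4}. \<bar>a i\<bar> + \<bar>b i\<bar>)"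
      using assms by (intro member_le_sum) auto
    then show "\<bar>a i\<bar> + \<bar>b i\<bar> \<le> Mc a b" unfolding Mc_def by simp
    show "0 \<le> supnorm x" unfolding supnorm_def by simp
  qed
  finally show ?thesis .
qed

lemma inj_pair:
  assumes np: "\<forall>i\<in>{1..4}. \<forall>j\<in>{1..4}. i \<noteq> j \<longrightarrow> a i * b j \<noteq> a j * b i"
    and "j \<in> {1..4}" "k \<in> {1..4}" "j \<noteq> k"
  shows "inj (\<lambda>x. (linform a b j x, linform a b k x))"
proof (rule injI)
  fix x y assume e: "(linform a b j x, linform a b k x) = (linform a b j y, linform a b k y)"
  obtain x1 x2 where x: "x = (x1, x2)" by (cases x)
  obtain y1 y2 where y: "y = (y1, y2)" by (cases y)
  define d1 where "d1 = x1 - y1"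
  define d2 where "d2 = x2 - y2"
  have h1: "a j * d1 + b j * d2 = 0" "a k * d1 + b k * d2 = 0"
    using e unfolding x y linform_def d1_def d2_def by (auto simp: algebra_simps)
  have r: "a j * b k - a k * b j \<noteq> 0" using np assms by auto
  have "(a j * b k - a k * b j) * d1 = b k * (a j * d1 + b j * d2) - b j * (a k * d1 + b k * d2)"
    by (simp add: algebra_simps)
  then have "d1 = 0" using h1 r by simp
  have "(a j * b k - a k * b j) * d2 = a j * (a k * d1 + b k * d2) - a k * (a j * d1 + b j * d2)"
    by (simp add: algebra_simps)
  then have "d2 = 0" using h1 r by simp
  show "x = y" using \<open>d1 = 0\<close> \<open>d2 = 0\<close> unfolding x y d1_def d2_def by simp
qed

definition Xs :: "(nat \<Rightarrow> int) \<Rightarrow> (nat \<Rightarrow> int) \<Rightarrow> nat \<Rightarrow> nat \<Rightarrow> nat \<Rightarrow> real \<Rightarrow> real \<Rightarrow> (int \<times> int) set" where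
  "Xs a b i1 j q S R = {x. real_of_int (supnorm x) < 2*S \<and> R \<le> real_of_int \<bar>linform a b i1 x\<bar> \<and>
       real_of_int \<bar>linform a b i1 x\<bar> < 2*R \<and> int q dvd linform a b j x}"

lemma card_via:
  assumes "inj f" "f ` X \<subseteq> Y1 \<times> Y2" "finite Y1" "finite Y2"
  shows "finite X \<and> card X \<le> card Y1 * card Y2"
proof -
  have fi: "finite (f ` X)" using assms by (meson finite_SigmaI finite_subset)
  then have "finite X" using assms(1) finite_imageD inj_on_subset by blast
  moreover have "card X = card (f ` X)" using assms(1) by (simp add: card_image inj_on_subset)
  moreover have "card (f ` X) \<le> card (Y1 \<times> Y2)" using assms by (intro card_mono) auto
  ultimately show ?thesis by (simp add: card_cartesian_product)
qed

lemma Lreal: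
  assumes "i \<in> {1..4}" "real_of_int (supnorm x) < 2*S"
  shows "\<bar>real_of_int (linform a b i x)\<bar> \<le> 2 * real_of_int (Mc a b) * S"
proof -
  have "real_of_int \<bar>linform a b i x\<bar> \<le> real_of_int (Mc a b) * real_of_int (supnorm x)"
    using Lbound[OF assms(1), of a b x] by (metis of_int_le_iff of_int_mult)
  also have "\<dots> \<le> real_of_int (Mc a b) * (2*S)"
    using assms(2) Mc_ge1[of a b] by (intro mult_left_mono) auto
  finally show ?thesis by simp
qed

lemma card_X:
  assumes np: "\<forall>i\<in>{1..4}. \<forall>j\<in>{1..4}. i \<noteq> j \<longrightarrow> a i * b j \<noteq> a j * b i"
    and i1: "i1 \<in> {1..4}" and j: "j \<in> {1..4}" and q: "q \<ge> 1" and S: "S \<ge> 1" and R: "R \<ge> 1"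
  shows "finite (Xs a b i1 j q S R) \<and>
     real (card (Xs a b i1 j q S R)) \<le> 30 * real_of_int (Mc a b) * S * R / q + 5 * R"
proof -
  define M where "M = real_of_int (Mc a b)"
  have M: "M \<ge> 1" unfolding M_def using Mc_ge1[of a b] by simp
  have qi: "int q \<ge> 1" using q by simp
  note X_def = Xs_def[of a b i1 j q S R]
  show ?thesis
  proof (cases "j = i1")
    case False
    define Y1 where "Y1 = {u::int. int q dvd u \<and> \<bar>u\<bar> \<le> 2 * M * S}"
    define Y2 where "Y2 = {u::int. 1 dvd u \<and> \<bar>u\<bar> \<le> 2 * R}"
    have c1: "finite Y1 \<and> real (card Y1) \<le> 2 * (2*M*S) / q + 1"
      unfolding Y1_def using card_mult[OF qi, of "2*M*S"] M S by simp
    have c2: "finite Y2 \<and> real (card Y2) \<le> 2 * (2*R) / 1 + 1"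
      unfolding Y2_def using card_mult[of 1 "2*R"] R by simp
    have im: "(\<lambda>x. (linform a b j x, linform a b i1 x)) ` Xs a b i1 j q S R \<subseteq> Y1 \<times> Y2"
      unfolding X_def Y1_def Y2_def M_def using Lreal[OF j] by auto
    have cv: "finite (Xs a b i1 j q S R) \<and> card (Xs a b i1 j q S R) \<le> card Y1 * card Y2"
      using card_via[OF inj_pair[OF np j i1 False] im] c1 c2 by blast
    define \<alpha> where "\<alpha> = M * S / q"
    have \<alpha>: "\<alpha> \<ge> 0" unfolding \<alpha>_def using M S by simp
    have "real (card (Xs a b i1 j q S R)) \<le> real (card Y1) * real (card Y2)"
      using cv by (metis of_nat_le_iff of_nat_mult)
    also have "\<dots> \<le> (4 * \<alpha> + 1) * (4 * R + 1)"
      using c1 c2 by (intro mult_mono) (auto simp: \<alpha>_def)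
    also have "\<dots> = 16 * \<alpha> * R + 4 * \<alpha> + 4 * R + 1" by (simp add: algebra_simps)
    also have "\<dots> \<le> 20 * \<alpha> * R + 5 * R"
    proof -
      have "\<alpha> \<le> \<alpha> * R" using \<alpha> R by (metis mult_le_cancel_left1 mult.commute order.strict_iff_not)
      then show ?thesis using R by linarith
    qed
    also have "\<dots> \<le> 30 * M * S * R / q + 5 * R"
    proof -
      have "\<alpha> * R \<ge> 0" using \<alpha> R by simp
      moreover have "30 * M * S * R / q = 30 * (\<alpha> * R)" unfolding \<alpha>_def by simp
      moreover have "20 * \<alpha> * R = 20 * (\<alpha> * R)" by simp
      ultimately show ?thesis by (smt (verit))
    qed
    finally show ?thesis using cv unfolding M_def by simp
  next
    case True
    define k where "k = (if i1 = 1 then 2 else (1::nat))"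
    have k: "k \<in> {1..4}" "i1 \<noteq> k" unfolding k_def by auto
    show ?thesis
    proof (cases "Xs a b i1 j q S R = {}")
      case True
      have "0 \<le> 30 * M * S * R / q" using M S R by simp
      then show ?thesis using True R unfolding M_def by simp
    next
      case False
      then obtain x0 where x0: "x0 \<in> Xs a b i1 j q S R" by blast
      have "\<bar>int q\<bar> \<le> \<bar>linform a b i1 x0\<bar>"
      proof (rule dvd_imp_le_int)
        show "linform a b i1 x0 \<noteq> 0" using x0 R unfolding X_def by auto
        show "int q dvd linform a b i1 x0" using x0 True unfolding X_def by auto
      qed
      moreover have "real_of_int \<bar>linform a b i1 x0\<bar> < 2 * R" using x0 unfolding X_def by simp
      ultimately have "real q < 2 * R"
        by (metis abs_of_nat of_int_le_iff of_int_of_nat_eq order.strict_trans1)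
      then have qR: "1 \<le> 2 * (R / q)" using q by (simp add: field_simps)
      define Y1 where "Y1 = {u::int. int q dvd u \<and> \<bar>u\<bar> \<le> 2 * R}"
      define Y2 where "Y2 = {u::int. 1 dvd u \<and> \<bar>u\<bar> \<le> 2 * M * S}"
      have c1: "finite Y1 \<and> real (card Y1) \<le> 2 * (2*R) / q + 1"
        unfolding Y1_def using card_mult[OF qi, of "2*R"] R by simp
      have c2: "finite Y2 \<and> real (card Y2) \<le> 2 * (2*M*S) / 1 + 1"
        unfolding Y2_def using card_mult[of 1 "2*M*S"] M S by simp
      have im: "(\<lambda>x. (linform a b i1 x, linform a b k x)) ` Xs a b i1 j q S R \<subseteq> Y1 \<times> Y2"
        unfolding X_def Y1_def Y2_def M_def using Lreal[OF k(1)] True by auto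
      have cv: "finite (Xs a b i1 j q S R) \<and> card (Xs a b i1 j q S R) \<le> card Y1 * card Y2"
        using card_via[OF inj_pair[OF np i1 k] im] c1 c2 by blast
      define \<beta> where "\<beta> = R / q"
      have MS: "M * S \<ge> 1" using M S by (metis mult_mono' one_le_numeral order.trans mult_1 zero_le_one)
      have "real (card (Xs a b i1 j q S R)) \<le> real (card Y1) * real (card Y2)"
        using cv by (metis of_nat_le_iff of_nat_mult)
      also have "\<dots> \<le> (4 * \<beta> + 1) * (4 * (M * S) + 1)"
        using c1 c2 by (intro mult_mono) (auto simp: \<beta>_def)
      also have "\<dots> \<le> (6 * \<beta>) * (5 * (M * S))"
        using qR MS unfolding \<beta>_def by (intro mult_mono) auto
      also have "\<dots> = 30 * M * S * R / q" unfolding \<beta>_def by simp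
      finally show ?thesis using cv R unfolding M_def by simp
    qed
  qed
qed

theorem lemma5p9:
  fixes a b :: "nat \<Rightarrow> int"
  assumes coprime_coeffs: "\<forall>i\<in>{1..4}. gcd (a i) (b i) = 1"
    and non_proportional: "\<forall>i\<in>{1..4}. \<forall>j\<in>{1..4}. i \<noteq> j \<longrightarrow> a i * b j \<noteq> a j * b i"
  shows "\<exists>C>0. \<forall>(\<delta>::real) (R::real) (S::real) (i1::nat).
           \<delta> \<ge> 0 \<longrightarrow> R \<ge> 1 \<longrightarrow> S \<ge> 1 \<longrightarrow> i1 \<in> {1..4} \<longrightarrow>
           real (card {x :: int \<times> int. gcd (fst x) (snd x) = 1 \<and>
                   (\<Prod>i\<in>{1..4}. linform a b i x) \<noteq> 0 \<and>
                   S \<le> real_of_int (supnorm x) \<and> real_of_int (supnorm x) < 2 * S \<and>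
                   R \<le> real_of_int \<bar>linform a b i1 x\<bar> \<and> real_of_int \<bar>linform a b i1 x\<bar> < 2 * R \<and>
                   real (Delta_bad a b x) > (S * R) powr \<delta>})
             \<le> C * (S * R) powr (1 - \<delta> / 8)"
proof -
  define M where "M = real_of_int (Mc a b)"
  define Kn where "Kn = (nat \<bar>Res a b\<bar>)^4"
  define K where "K = real Kn"
  have M1: "M \<ge> 1" unfolding M_def using Mc_ge1[of a b] by simp
  have Kn1: "Kn \<ge> 1" unfolding Kn_def using Res_nz[OF non_proportional] by simp
  then have K1: "K \<ge> 1" unfolding K_def by simp
  show ?thesis
  proof (intro exI[of _ "960*M*K"] conjI allI impI)
    show "960*M*K > 0" using M1 K1 by simp
    fix \<delta> R S :: real and i1 :: nat
    assume \<delta>: "\<delta> \<ge> 0" and R: "R \<ge> 1" and S: "S \<ge> 1" and i1: "i1 \<in> {1..4}"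
    define Set where "Set = {x :: int \<times> int. gcd (fst x) (snd x) = 1 \<and>
                   (\<Prod>i\<in>{1..4}. linform a b i x) \<noteq> 0 \<and>
                   S \<le> real_of_int (supnorm x) \<and> real_of_int (supnorm x) < 2 * S \<and>
                   R \<le> real_of_int \<bar>linform a b i1 x\<bar> \<and> real_of_int \<bar>linform a b i1 x\<bar> < 2 * R \<and>
                   real (Delta_bad a b x) > (S * R) powr \<delta>}"
    define T where "T = (S*R) powr \<delta>"
    define U where "U = (T/K) powr (1/4)"
    define N where "N = nat \<lfloor>2*M*S\<rfloor>"
    define qf where "qf p = fst p^2 * snd p^3" for p :: "nat \<times> nat"
    define I where "I = {p \<in> {1..N}\<times>{1..N}. U \<le> real (qf p) \<and> qf p \<le> N}"
    have SR: "S*R \<ge> 1" using S R by (metis mult_mono' one_le_numeral order.trans mult_1 zero_le_one)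
    have T1: "T \<ge> 1" unfolding T_def using SR \<delta> by (simp add: ge_one_powr_ge_zero)
    have TK: "T / K > 0" using T1 K1 by simp
    have U0: "U > 0" unfolding U_def using TK T1 K1 by simp
    have U4: "U^4 = T/K"
    proof -
      have "U^4 = U powr (real 4)" using U0 by (simp add: powr_realpow)
      also have "\<dots> = T/K" unfolding U_def using TK T1 K1 by (simp add: powr_powr)
      finally show ?thesis .
    qed
    have qf1: "qf p \<ge> 1" if "p \<in> I" for p
      using that unfolding I_def qf_def by (auto simp: Suc_le_eq)
    have finI: "finite I" unfolding I_def by simp
    have cover: "Set \<subseteq> (\<Union>j\<in>{1..4}. \<Union>p\<in>I. Xs a b i1 j (qf p) S R)"
    proof
      fix x assume x: "x \<in> Set"
      then have g: "gcd (fst x) (snd x) = 1" and P: "(\<Prod>i\<in>{1..4}. linform a b i x) \<noteq> 0"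
        and sn: "real_of_int (supnorm x) < 2 * S"
        and D: "real (Delta_bad a b x) > T" unfolding Set_def T_def by auto
      define s where "s i = sqfull_part (linform a b i x)" for i
      have db: "Delta_bad a b x \<le> s 1 * s 2 * s 3 * s 4 * Kn"
        using delta_bound[OF non_proportional g P] unfolding s_def Kn_def .
      have "T < real (s 1 * s 2 * s 3 * s 4 * Kn)" using D db by (meson of_nat_le_iff order.strict_trans2)
      then have "T < real (s 1) * real (s 2) * real (s 3) * real (s 4) * K" unfolding K_def by simp
      then have lt: "T / K < real (s 1) * real (s 2) * real (s 3) * real (s 4)" using K1 by (simp add: field_simps)
      have "\<exists>j\<in>{1..4}. U \<le> real (s j)"
      proof (rule ccontr)
        assume "\<not> ?thesis"
        then have "real (s j) \<le> U" if "j \<in> {1..4}" for j using that by force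
        then have "real (s 1) \<le> U" "real (s 2) \<le> U" "real (s 3) \<le> U" "real (s 4) \<le> U" by auto
        then have "real (s 1) * real (s 2) * real (s 3) * real (s 4) \<le> U * U * U * U"
          by (intro mult_mono) auto
        also have "\<dots> = T / K" using U4 by (simp add: power4_eq_xxxx)
        finally show False using lt by simp
      qed
      then obtain j where j: "j \<in> {1..4}" and Uj: "U \<le> real (s j)" by blast
      obtain A B where AB: "A \<ge> 1" "B \<ge> 1" "sqf (nat \<bar>linform a b j x\<bar>) = A^2 * B^3"
        using sqf_rep by blast
      have sj: "s j = qf (A, B)" unfolding s_def qf_def using AB by (simp add: sqfull_part_sqf)
      have Lj: "linform a b j x \<noteq> 0" using P j by (auto simp: prod_zero_iff)
      have dv: "s j dvd nat \<bar>linform a b j x\<bar>" unfolding s_def sqfull_part_sqf by (rule sqf_dvd)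
      then have dvi: "int (qf (A,B)) dvd linform a b j x" using sj by simp
      have "s j \<le> nat \<bar>linform a b j x\<bar>" using dv Lj by (intro dvd_imp_le) auto
      moreover have "real_of_int \<bar>linform a b j x\<bar> \<le> 2*M*S" using Lreal[OF j sn] unfolding M_def by simp
      ultimately have "real (s j) \<le> 2*M*S" by linarith
      then have qN: "qf (A,B) \<le> N" unfolding N_def using sj by linarith
      have "A \<le> qf (A,B)" "B \<le> qf (A,B)" unfolding qf_def using AB
        by (simp_all add: power2_eq_square power3_eq_cube Suc_le_eq)
      then have "(A,B) \<in> I" unfolding I_def using AB qN Uj sj by auto
      moreover have "x \<in> Xs a b i1 j (qf (A,B)) S R" unfolding Xs_def using x dvi unfolding Set_def by auto
      ultimately show "x \<in> (\<Union>j\<in>{1..4}. \<Union>p\<in>I. Xs a b i1 j (qf p) S R)" using j by blast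
    qed
    have finX: "finite (Xs a b i1 j (qf p) S R)" if "j \<in> {1..4}" "p \<in> I" for j p
      using card_X[OF non_proportional i1 that(1) qf1[OF that(2)] S R] by blast
    have finU: "finite (\<Union>j\<in>{1..4}. \<Union>p\<in>I. Xs a b i1 j (qf p) S R)" using finX finI by auto
    have "card Set \<le> card (\<Union>j\<in>{1..4}. \<Union>p\<in>I. Xs a b i1 j (qf p) S R)" by (rule card_mono[OF finU cover])
    also have "\<dots> \<le> (\<Sum>j\<in>{1..4}. card (\<Union>p\<in>I. Xs a b i1 j (qf p) S R))" by (rule card_UN_le) simp
    also have "\<dots> \<le> (\<Sum>j\<in>{1..4}. \<Sum>p\<in>I. card (Xs a b i1 j (qf p) S R))"
      by (intro sum_mono card_UN_le finI)
    finally have "real (card Set) \<le> real (\<Sum>j\<in>{1..4}. \<Sum>p\<in>I. card (Xs a b i1 j (qf p) S R))"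
      by (simp only: of_nat_le_iff)
    also have "\<dots> = (\<Sum>j\<in>{1..4}. \<Sum>p\<in>I. real (card (Xs a b i1 j (qf p) S R)))" by simp
    also have "\<dots> \<le> (\<Sum>j\<in>{1..4::nat}. \<Sum>p\<in>I. 40*M*S*R * (1 / real (qf p)))"
    proof (intro sum_mono)
      fix j p assume j: "j \<in> {1..4::nat}" and p: "p \<in> I"
      have q1: "real (qf p) \<ge> 1" using qf1[OF p] by simp
      have "real (qf p) \<le> real N" using p unfolding I_def by simp
      also have "real N \<le> 2*M*S" unfolding N_def using M1 S by simp
      finally have qN: "real (qf p) \<le> 2*M*S" .
      have c: "real (card (Xs a b i1 j (qf p) S R)) \<le> 30*M*S*R / real (qf p) + 5*R"
        using card_X[OF non_proportional i1 j qf1[OF p] S R] unfolding M_def by simp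
      have "R * real (qf p) \<le> R * (2*M*S)" using qN R by (intro mult_left_mono) auto
      then have "5*R \<le> 10*M*S*R / real (qf p)" using q1 by (simp add: field_simps)
      moreover have "30*M*S*R / real (qf p) + 10*M*S*R / real (qf p) = 40*M*S*R * (1 / real (qf p))"
        using q1 by (simp add: field_simps)
      ultimately show "real (card (Xs a b i1 j (qf p) S R)) \<le> 40*M*S*R * (1 / real (qf p))"
        using c by linarith
    qed
    also have "\<dots> = 4 * (40*M*S*R * (\<Sum>p\<in>I. 1 / real (qf p)))"
      by (simp add: sum_distrib_left)
    also have "\<dots> \<le> 4 * (40*M*S*R * (6 / sqrt U))"
    proof -
      have "(\<Sum>p\<in>I. 1 / real (qf p)) \<le> (\<Sum>p\<in>{p\<in>{1..N}\<times>{1..N}. U \<le> real (fst p^2 * snd p^3)}. 1 / real (fst p^2 * snd p^3))"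
        unfolding qf_def by (rule sum_mono2) (auto simp: I_def qf_def)
      also have "\<dots> \<le> 6 / sqrt U" by (rule sumAB[OF U0])
      finally show ?thesis using M1 S R by (intro mult_left_mono) auto
    qed
    also have "\<dots> \<le> 960*M*K * (S*R) powr (1 - \<delta>/8)"
    proof -
      define P where "P = (S*R) powr (\<delta>/8)"
      have P0: "P > 0" unfolding P_def using SR S R by simp
      have "sqrt U = U powr (1/2)" using U0 by (simp add: powr_half_sqrt)
      also have "\<dots> = (T/K) powr (1/8)" unfolding U_def using TK by (simp add: powr_powr)
      also have "\<dots> = T powr (1/8) / K powr (1/8)" using T1 K1 by (simp add: powr_divide)
      also have "T powr (1/8) = P" unfolding T_def P_def using SR by (simp add: powr_powr)
      finally have sU: "sqrt U = P / K powr (1/8)" .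
      have Kp: "K powr (1/8) \<le> K"
        using powr_mono[of "1/8" 1 K] K1 by simp
      have SRP: "(S*R) powr (1 - \<delta>/8) = S*R / P" unfolding P_def using SR by (simp add: powr_diff)
      have "4 * (40*M*S*R * (6 / sqrt U)) = 960*M*(S*R) * K powr (1/8) / P"
        unfolding sU using P0 K1 by (simp add: field_simps)
      also have "\<dots> \<le> 960*M*(S*R) * K / P"
        using Kp P0 M1 SR by (intro divide_right_mono mult_left_mono) auto
      also have "\<dots> = 960*M*K * (S*R) powr (1 - \<delta>/8)" unfolding SRP by simp
      finally show ?thesis .
    qed
    finally show "real (card Set) \<le> 960*M*K * (S*R) powr (1 - \<delta>/8)" .
  qed
qed

end
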